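(* Let $\Delta=\Delta_0*\dots*\Delta_n$ be a regular filtered euclidean simplex ($\Delta_n\ne\emptyset$). Then the chain map $\mu^*_\Delta\colon N^*(\Delta)\to\widetilde N^*(\Delta)$ is injective and its image is exactly $\widetilde N^*_{\overline0}(\Delta)=\{\omega\in\widetilde N^*(\Delta)\mid\|\omega\|_\ell\le0\text{ and }\|d\omega\|_\ell\le0\text{ for all }\ell\in\{1,\dots,n\}\}$; hence $\mu^*_\Delta\colon N^*(\Delta)\to\widetilde N^*_{\overline0}(\Delta)$ is an isomorphism.
   Context: Coefficients in a commutative ring $R$. For an euclidean simplex $\Delta$, $N_*(\Delta),N^*(\Delta)$ are the simplicial chain and cochain complexes, ${\bf 1}_F$ the cochain dual to a face $F$. For a face $F$ of $\Delta$, $(F,0)$ denotes $F$ as a face of the cone $c\Delta=\Delta*[\mathtt v]$, $(F,1)$ denotes the face $cF$, and $(\emptyset,1)=[\mathtt v]$. For a filtered simplex $\Delta=\Delta_0*\dots*\Delta_n$ (join decomposition, some $\Delta_i$ possibly empty), $\widetilde N^*(\Delta)=N^*(c\Delta_0)\otimes\dots\otimes N^*(c\Delta_{n-1})\otimes N^*(\Delta_n)$ and $\widetilde N_*(\Delta)=N_*(c\Delta_0)\otimes\dots\otimes N_*(c\Delta_{n-1})\otimes N_*(\Delta_n)$, with bases ${\bf 1}_{(F,\varepsilon)}={\bf 1}_{(F_0,\varepsilon_0)}\otimes\dots\otimes{\bf 1}_{(F_{n-1},\varepsilon_{n-1})}\otimes{\bf 1}_{F_n}$ resp. $(F_0,\varepsilon_0)\otimes\dots\otimes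 F_n$ ($\varepsilon_i\in\{0,1\}$, $F_i$ a face of $\Delta_i$ or empty with $\varepsilon_i=1$, $\varepsilon_n=0$). For $\ell\in\{1,\dots,n\}$, $\|{\bf 1}_{(F,\varepsilon)}\|_\ell=-\infty$ if $\varepsilon_{n-\ell}=1$, and $=\sum_{i>n-\ell}(\dim F_i+\varepsilon_i)$ if $\varepsilon_{n-\ell}=0$ (with $\dim\emptyset=-1$); for $\omega=\sum_b\lambda_b{\bf 1}_{(F_b,\varepsilon_b)}$, $\lambda_b\ne0$, $\|\omega\|_\ell=\max_b\|{\bf 1}_{(F_b,\varepsilon_b)}\|_\ell$, and $\|0\|_\ell=-\infty$. The chain map $\mu^\Delta_*\colon\widetilde N_*(\Delta)\to N_*(\Delta)$ sends $(F_0,\varepsilon_0)\otimes\dots\otimes(F_{n-1},\varepsilon_{n-1})\otimes F_n$ to the face $F_0*\dots*F_\ell$ of $\Delta$, where $\ell$ is the least $j$ with $\varepsilon_j=0$, if $\sum_i(\dim F_i+\varepsilon_i)=\dim(F_0*\dots*F_\ell)$, and to $0$ otherwise; $\mu^*_\Delta$ is its dual. *)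

theory Defs
  imports Main "HOL-Library.Extended_Real"
begin

text \<open>A filtered euclidean simplex Delta = Delta_0 * ... * Delta_n is given by
  n and the numbers of vertices j i of Delta_i; the vertices of Delta_i are 0,...,j i - 1
  (Delta_i is empty iff j i = 0). Vertices of Delta are ordered lexicographically by
  (i, k). A face of Delta is a family G of vertex sets G i of Delta_i, not all empty.
  In the cone c Delta_i the cone vertex v is encoded as the number j i (the last vertex).
  A face (F, eps) of c Delta_i (or the vertex v = (empty,1)) is encoded by the nonempty set
  F union (if eps then {j i} else {}).\<close>

definition faces :: "nat \<Rightarrow> (nat \<Rightarrow> nat) \<Rightarrow> (nat \<Rightarrow> nat set) set" where
  "faces n j = {G. (\<forall>i\<le>n. G i \<subseteq> {..<j i}) \<and> (\<forall>i>n. G i = {}) \<and> (\<exists>i\<le>n. G i \<noteq> {})}"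

text \<open>Basis of the blown-up complex: tuples (F_0,eps_0) x ... x (F_{n-1},eps_{n-1}) x F_n.\<close>
definition tbasis :: "nat \<Rightarrow> (nat \<Rightarrow> nat) \<Rightarrow> (nat \<Rightarrow> nat set) set" where
  "tbasis n j = {b. (\<forall>i<n. b i \<subseteq> {..j i} \<and> b i \<noteq> {}) \<and> b n \<subseteq> {..<j n} \<and> b n \<noteq> {}
                    \<and> (\<forall>i>n. b i = {})}"

text \<open>Cochains = R-valued functions on the (finite) basis, i.e. linear forms.\<close>
definition cochN :: "nat \<Rightarrow> (nat \<Rightarrow> nat) \<Rightarrow> ((nat \<Rightarrow> nat set) \<Rightarrow> 'r::comm_ring_1) set" where
  "cochN n j = {\<omega>. \<forall>G. G \<notin> faces n j \<longrightarrow> \<omega> G = 0}"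

definition cochT :: "nat \<Rightarrow> (nat \<Rightarrow> nat) \<Rightarrow> ((nat \<Rightarrow> nat set) \<Rightarrow> 'r::comm_ring_1) set" where
  "cochT n j = {\<omega>. \<forall>b. b \<notin> tbasis n j \<longrightarrow> \<omega> b = 0}"

text \<open>Differential of the tensor product cochain complex: (d omega)(b) = omega(boundary b),
  where the boundary on the tensor product of simplicial chain complexes carries the Koszul
  sign (-1)^(sum of degrees of the preceding factors), and the simplicial boundary removes the
  vertex in position p with sign (-1)^p (faces of dimension 0 have boundary 0).\<close>
definition dT :: "nat \<Rightarrow> (nat \<Rightarrow> nat) \<Rightarrow> ((nat \<Rightarrow> nat set) \<Rightarrow> 'r::comm_ring_1)
                   \<Rightarrow> ((nat \<Rightarrow> nat set) \<Rightarrow> 'r)" where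
  "dT n j \<omega> = (\<lambda>b. if b \<in> tbasis n j then
      (\<Sum>i\<le>n. \<Sum>v\<in>b i. if 2 \<le> card (b i)
          then (-1) ^ ((\<Sum>k<i. card (b k) - 1) + card {u\<in>b i. u < v}) * \<omega> (b(i := b i - {v}))
          else 0)
      else 0)"

definition lvl :: "(nat \<Rightarrow> nat) \<Rightarrow> (nat \<Rightarrow> nat set) \<Rightarrow> nat" where
  "lvl j b = (LEAST i. j i \<notin> b i)"

definition muface :: "(nat \<Rightarrow> nat) \<Rightarrow> (nat \<Rightarrow> nat set) \<Rightarrow> (nat \<Rightarrow> nat set)" where
  "muface j b = (\<lambda>i. if i \<le> lvl j b then b i - {j i} else {})"

definition mu_ok :: "nat \<Rightarrow> (nat \<Rightarrow> nat) \<Rightarrow> (nat \<Rightarrow> nat set) \<Rightarrow> bool" where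
  "mu_ok n j b \<longleftrightarrow> (\<Sum>i\<le>n. int (card (b i)) - 1) = int (\<Sum>i\<le>n. card (muface j b i)) - 1"

definition muT :: "nat \<Rightarrow> (nat \<Rightarrow> nat) \<Rightarrow> ((nat \<Rightarrow> nat set) \<Rightarrow> 'r::comm_ring_1)
                   \<Rightarrow> ((nat \<Rightarrow> nat set) \<Rightarrow> 'r)" where
  "muT n j \<omega> = (\<lambda>b. if b \<in> tbasis n j \<and> mu_ok n j b then \<omega> (muface j b) else 0)"

text \<open>Perversity norms ||.||_l with values in the extended reals (-infinity = bot).\<close>
definition bnorm :: "nat \<Rightarrow> (nat \<Rightarrow> nat) \<Rightarrow> nat \<Rightarrow> (nat \<Rightarrow> nat set) \<Rightarrow> ereal" where
  "bnorm n j l b = (if j (n - l) \<in> b (n - l) then -\<infinity>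
                    else ereal (real_of_int (\<Sum>i\<in>{n - l<..n}. int (card (b i)) - 1)))"

definition tnorm :: "nat \<Rightarrow> (nat \<Rightarrow> nat) \<Rightarrow> nat \<Rightarrow> ((nat \<Rightarrow> nat set) \<Rightarrow> 'r::comm_ring_1) \<Rightarrow> ereal" where
  "tnorm n j l \<omega> = Sup (bnorm n j l ` {b. \<omega> b \<noteq> 0})"

definition tilde0 :: "nat \<Rightarrow> (nat \<Rightarrow> nat) \<Rightarrow> ((nat \<Rightarrow> nat set) \<Rightarrow> 'r::comm_ring_1) set" where
  "tilde0 n j = {\<omega> \<in> cochT n j. \<forall>l\<in>{1..n}. tnorm n j l \<omega> \<le> 0 \<and> tnorm n j l (dT n j \<omega>) \<le> 0}"

end

theory Submission
  imports Defs
begin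

lemma tbasis_fin: "b \<in> tbasis n j \<Longrightarrow> finite (b i)"
proof -
  assume a: "b \<in> tbasis n j"
  show ?thesis
  proof (cases "i < n")
    case True then have "b i \<subseteq> {..j i}" using a unfolding tbasis_def by auto
    then show ?thesis using finite_subset by blast
  next
    case False
    show ?thesis
    proof (cases "i = n")
      case True then have "b i \<subseteq> {..<j n}" using a unfolding tbasis_def by auto
      then show ?thesis using finite_subset by blast
    qed (use a False in \<open>auto simp: tbasis_def\<close>)
  qed
qed

lemma tbasis_ne: "b \<in> tbasis n j \<Longrightarrow> i \<le> n \<Longrightarrow> b i \<noteq> {}"
  unfolding tbasis_def by (cases "i = n") auto

lemma tbasis_card: "b \<in> tbasis n j \<Longrightarrow> i \<le> n \<Longrightarrow> 1 \<le> card (b i)"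
  using tbasis_fin tbasis_ne by (metis One_nat_def Suc_leI card_gt_0_iff)

lemma tbasis_out: "b \<in> tbasis n j \<Longrightarrow> n < i \<Longrightarrow> b i = {}"
  unfolding tbasis_def by auto

lemma tbasis_upd:
  assumes "b \<in> tbasis n j" "i \<le> n" "X \<noteq> {}" "i < n \<Longrightarrow> X \<subseteq> {..j i}" "i = n \<Longrightarrow> X \<subseteq> {..<j i}"
  shows "b(i := X) \<in> tbasis n j"
  using assms unfolding tbasis_def by (cases "i = n") auto

lemma tbasis_remove:
  assumes "b \<in> tbasis n j" "k \<le> n" "v \<in> b k" "2 \<le> card (b k)"
  shows "b(k := b k - {v}) \<in> tbasis n j"
proof (rule tbasis_upd[OF assms(1,2)])
  show "b k - {v} \<noteq> {}"
  proof
    assume "b k - {v} = {}"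
    then have "b k = {v}" using assms(3) by auto
    then show False using assms(4) by simp
  qed
  show "k < n \<Longrightarrow> b k - {v} \<subseteq> {..j k}" using assms(1) unfolding tbasis_def by auto
  show "k = n \<Longrightarrow> b k - {v} \<subseteq> {..<j k}" using assms(1) unfolding tbasis_def by auto
qed

lemma lvl_props:
  assumes "b \<in> tbasis n j"
  shows "lvl j b \<le> n" "j (lvl j b) \<notin> b (lvl j b)" "\<And>i. i < lvl j b \<Longrightarrow> j i \<in> b i"
proof -
  have jn: "j n \<notin> b n" using assms unfolding tbasis_def by auto
  show "lvl j b \<le> n" unfolding lvl_def by (rule Least_le) (rule jn)
  show "j (lvl j b) \<notin> b (lvl j b)" unfolding lvl_def by (rule LeastI) (rule jn)
  show "\<And>i. i < lvl j b \<Longrightarrow> j i \<in> b i" unfolding lvl_def using not_less_Least by blast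
qed

lemma lvl_le: "j m \<notin> b m \<Longrightarrow> lvl j b \<le> m"
  unfolding lvl_def by (rule Least_le)

lemma lvl_eq:
  assumes "b \<in> tbasis n j" "\<forall>i\<le>lvl j b. b' i = b i"
  shows "lvl j b' = lvl j b"
proof -
  note P = lvl_props[OF assms(1)]
  show ?thesis unfolding lvl_def[of j b']
  proof (rule Least_equality)
    show "j (lvl j b) \<notin> b' (lvl j b)" using P(2) assms(2) by simp
    fix y assume "j y \<notin> b' y"
    then show "lvl j b \<le> y" using P(3) assms(2) by (metis le_less_linear less_imp_le)
  qed
qed

lemma lvl_mono:
  assumes "b \<in> tbasis n j" "\<And>i. b' i \<subseteq> b i"
  shows "lvl j b' \<le> lvl j b"
  using lvl_props(2)[OF assms(1)] assms(2) by (meson lvl_le subsetD)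

lemma muT_eq:
  assumes "b \<in> tbasis n j" "b' \<in> tbasis n j" "\<forall>i\<le>lvl j b. b' i = b i"
    "\<forall>i\<le>n. card (b' i) = card (b i)"
  shows "muT n j \<omega> b' = muT n j \<omega> b"
proof -
  have L: "lvl j b' = lvl j b" by (rule lvl_eq[OF assms(1,3)])
  have M: "muface j b' = muface j b" unfolding muface_def L using assms(3) by (intro ext) auto
  have O: "mu_ok n j b' = mu_ok n j b" unfolding mu_ok_def M using assms(4) by simp
  show ?thesis unfolding muT_def M O using assms(1,2) by simp
qed


lemma mu_ok_iff:
  assumes b: "b \<in> tbasis n j"
  shows "mu_ok n j b \<longleftrightarrow> (\<forall>i\<in>{lvl j b<..n}. card (b i) = 1)"
proof -
  define L where "L = lvl j b"
  note P = lvl_props[OF b, folded L_def]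
  have key: "int (card (muface j b i)) = (int (card (b i)) - 1) + (if i = L then 1 else 0)
      - (if L < i then int (card (b i)) - 1 else 0)" if "i \<le> n" for i
  proof -
    have c1: "1 \<le> card (b i)" using tbasis_card[OF b that] .
    consider "i < L" | "i = L" | "L < i" by linarith
    then show ?thesis
    proof cases
      case 1
      then have "muface j b i = b i - {j i}" unfolding muface_def L_def by simp
      moreover have "card (b i - {j i}) = card (b i) - 1"
        using P(3)[OF 1] tbasis_fin[OF b] by simp
      ultimately show ?thesis using 1 c1 by simp
    next
      case 2
      then have "muface j b i = b i" unfolding muface_def using P(2) by (simp add: L_def)
      then show ?thesis using 2 by simp
    next
      case 3
      then have "muface j b i = {}" unfolding muface_def L_def by simp
      then show ?thesis using 3 by simp
    qed
  qed
  define S where "S = (\<Sum>i\<le>n. int (card (b i)) - 1)"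
  define T where "T = (\<Sum>i\<in>{L<..n}. int (card (b i)) - 1)"
  have "int (\<Sum>i\<le>n. card (muface j b i)) = (\<Sum>i\<le>n. int (card (muface j b i)))" by simp
  also have "\<dots> = (\<Sum>i\<le>n. (int (card (b i)) - 1) + (if i = L then 1 else 0)
      - (if L < i then int (card (b i)) - 1 else 0))" using key by (intro sum.cong) auto
  also have "\<dots> = S + (\<Sum>i\<le>n. (if i = L then 1 else 0)) - (\<Sum>i\<le>n. (if L < i then int (card (b i)) - 1 else 0))"
    unfolding S_def by (simp add: sum.distrib sum_subtractf)
  also have "(\<Sum>i\<le>n. (if i = L then 1 else 0)) = (1::int)" using P(1) by simp
  also have "(\<Sum>i\<le>n. (if L < i then int (card (b i)) - 1 else 0)) = T"
  proof -
    have "{i \<in> {..n}. L < i} = {L<..n}" by auto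
    then show ?thesis unfolding T_def using sum.inter_filter[of "{..n}" "\<lambda>i. int (card (b i)) - 1" "\<lambda>i. L < i"]
      by simp
  qed
  finally have E: "int (\<Sum>i\<le>n. card (muface j b i)) = S + 1 - T" .
  have "mu_ok n j b \<longleftrightarrow> T = 0" unfolding mu_ok_def S_def[symmetric] E by linarith
  also have "\<dots> \<longleftrightarrow> (\<forall>i\<in>{L<..n}. int (card (b i)) - 1 = 0)"
    unfolding T_def using tbasis_card[OF b] by (intro sum_nonneg_eq_0_iff) (auto simp: Suc_le_eq)
  also have "\<dots> \<longleftrightarrow> (\<forall>i\<in>{L<..n}. card (b i) = 1)" by auto
  finally show ?thesis unfolding L_def .
qed

definition bad :: "nat \<Rightarrow> (nat \<Rightarrow> nat) \<Rightarrow> (nat \<Rightarrow> nat set) \<Rightarrow> bool" where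
  "bad n j b \<longleftrightarrow> (\<exists>m<n. j m \<notin> b m \<and> 0 < (\<Sum>i\<in>{m<..n}. int (card (b i)) - 1))"

lemma tnorm_iff:
  "(\<forall>l\<in>{1..n}. tnorm n j l f \<le> 0) \<longleftrightarrow> (\<forall>b. bad n j b \<longrightarrow> f b = 0)"
proof
  assume A: "\<forall>l\<in>{1..n}. tnorm n j l f \<le> 0"
  show "\<forall>b. bad n j b \<longrightarrow> f b = 0"
  proof (intro allI impI, rule ccontr)
    fix b assume "bad n j b" "f b \<noteq> 0"
    then obtain m where m: "m < n" "j m \<notin> b m" "0 < (\<Sum>i\<in>{m<..n}. int (card (b i)) - 1)"
      unfolding bad_def by blast
    define l where "l = n - m"
    have l: "l \<in> {1..n}" "n - l = m" using m(1) unfolding l_def by auto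
    have "bnorm n j l b \<le> tnorm n j l f" unfolding tnorm_def
      using \<open>f b \<noteq> 0\<close> by (intro Sup_upper) auto
    also have "\<dots> \<le> 0" using A l(1) by blast
    finally have "bnorm n j l b \<le> 0" .
    then have "real_of_int (\<Sum>i\<in>{m<..n}. int (card (b i)) - 1) \<le> 0"
      using m unfolding bnorm_def l(2) by simp
    then show False using m(3) by linarith
  qed
next
  assume A: "\<forall>b. bad n j b \<longrightarrow> f b = 0"
  show "\<forall>l\<in>{1..n}. tnorm n j l f \<le> 0"
  proof
    fix l assume l: "l \<in> {1..n}"
    show "tnorm n j l f \<le> 0" unfolding tnorm_def
    proof (rule Sup_least)
      fix x assume "x \<in> bnorm n j l ` {b. f b \<noteq> 0}"
      then obtain b where b: "f b \<noteq> 0" "x = bnorm n j l b" by auto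
      show "x \<le> 0"
      proof (cases "j (n - l) \<in> b (n - l)")
        case True then show ?thesis using b unfolding bnorm_def by simp
      next
        case False
        have "\<not> 0 < (\<Sum>i\<in>{n - l<..n}. int (card (b i)) - 1)"
        proof
          assume "0 < (\<Sum>i\<in>{n - l<..n}. int (card (b i)) - 1)"
          then have "bad n j b" unfolding bad_def using False l by (intro exI[of _ "n - l"]) auto
          then show False using A b by blast
        qed
        then have hh: "real_of_int (\<Sum>i\<in>{n - l<..n}. int (card (b i)) - 1) \<le> 0"
          by (simp only: of_int_le_0_iff not_less[symmetric])
        then show ?thesis using False b hh unfolding bnorm_def by simp
      qed
    qed
  qed
qed

lemma bad_iff:
  assumes b: "b \<in> tbasis n j"
  shows "bad n j b \<longleftrightarrow> \<not> mu_ok n j b"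
proof
  assume "bad n j b"
  then obtain m where m: "m < n" "j m \<notin> b m" "0 < (\<Sum>i\<in>{m<..n}. int (card (b i)) - 1)"
    unfolding bad_def by blast
  have "lvl j b \<le> m" using m(2) by (rule lvl_le)
  show "\<not> mu_ok n j b"
  proof
    assume "mu_ok n j b"
    then have "\<forall>i\<in>{m<..n}. card (b i) = 1" using mu_ok_iff[OF b] \<open>lvl j b \<le> m\<close> by auto
    then have "(\<Sum>i\<in>{m<..n}. int (card (b i)) - 1) = 0" by simp
    then show False using m(3) by simp
  qed
next
  assume "\<not> mu_ok n j b"
  then have "\<not> (\<forall>i\<in>{lvl j b<..n}. card (b i) = 1)" using mu_ok_iff[OF b] by simp
  then obtain i where i: "i \<in> {lvl j b<..n}" "card (b i) \<noteq> 1" by blast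
  have "1 \<le> card (b i)" using tbasis_card[OF b] i(1) by auto
  have "0 < int (card (b i)) - 1" using i(2) \<open>1 \<le> card (b i)\<close> by linarith
  also have "\<dots> \<le> (\<Sum>i\<in>{lvl j b<..n}. int (card (b i)) - 1)"
    using i(1) tbasis_card[OF b] by (intro member_le_sum) (auto simp: Suc_le_eq)
  finally show "bad n j b" unfolding bad_def using i(1) lvl_props(2)[OF b]
    by (intro exI[of _ "lvl j b"]) auto
qed

lemma tilde0_iff:
  "f \<in> tilde0 n j \<longleftrightarrow> f \<in> cochT n j \<and> (\<forall>b. bad n j b \<longrightarrow> f b = 0) \<and> (\<forall>b. bad n j b \<longrightarrow> dT n j f b = 0)"
  unfolding tilde0_def using tnorm_iff[of n j f] tnorm_iff[of n j "dT n j f"] by blast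


lemma dT_single:
  assumes c: "c \<in> tbasis n j" and i: "i \<le> n"
    and Z: "\<And>k v. k \<le> n \<Longrightarrow> k \<noteq> i \<Longrightarrow> v \<in> c k \<Longrightarrow> 2 \<le> card (c k) \<Longrightarrow> f (c(k := c k - {v})) = 0"
  shows "dT n j f c = (-1) ^ (\<Sum>k<i. card (c k) - 1) *
     (\<Sum>v\<in>c i. if 2 \<le> card (c i) then (-1) ^ card {u\<in>c i. u < v} * f (c(i := c i - {v})) else 0)"
proof -
  define g where "g k = (\<Sum>v\<in>c k. if 2 \<le> card (c k)
          then (-1) ^ ((\<Sum>k'<k. card (c k') - 1) + card {u\<in>c k. u < v}) * f (c(k := c k - {v}))
          else 0)" for k
  have "dT n j f c = (\<Sum>k\<le>n. g k)" unfolding dT_def g_def using c by simp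
  also have "\<dots> = g i + (\<Sum>k\<in>{..n} - {i}. g k)" using i by (subst sum.remove[of _ i]) auto
  also have "(\<Sum>k\<in>{..n} - {i}. g k) = 0"
    unfolding g_def by (intro sum.neutral ballI) (auto simp: Z)
  also have "g i = (-1) ^ (\<Sum>k<i. card (c k) - 1) *
     (\<Sum>v\<in>c i. if 2 \<le> card (c i) then (-1) ^ card {u\<in>c i. u < v} * f (c(i := c i - {v})) else 0)"
    unfolding g_def sum_distrib_left by (intro sum.cong) (auto simp: power_add)
  finally show ?thesis by simp
qed

lemma two_sum:
  fixes g :: "nat \<Rightarrow> 'r::comm_ring_1"
  assumes "u \<noteq> w"
  shows "(\<Sum>v\<in>{u, w}. (-1) ^ card {x\<in>{u, w}. x < v} * g v) = 0 \<longleftrightarrow> g u = g w"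
proof -
  have S: "(\<Sum>v\<in>{u, w}. (-1) ^ card {x\<in>{u, w}. x < v} * g v) =
     (-1) ^ card {x\<in>{u, w}. x < u} * g u + (-1) ^ card {x\<in>{u, w}. x < w} * g w"
    using assms by (subst sum.insert) auto
  show ?thesis
  proof (cases "u < w")
    case True
    have E: "{x\<in>{u, w}. x < u} = {}" "{x\<in>{u, w}. x < w} = {u}" using True by auto
    show ?thesis unfolding S E by (simp add: eq_neg_iff_add_eq_0[symmetric])
  next
    case False
    then have F: "w < u" using assms by simp
    have E: "{x\<in>{u, w}. x < u} = {w}" "{x\<in>{u, w}. x < w} = {}" using F by auto
    show ?thesis unfolding S E by (auto simp: add.commute eq_neg_iff_add_eq_0[symmetric])
  qed
qed

lemma neg1_pow_cancel:
  fixes x :: "'r::comm_ring_1"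
  shows "(-1) ^ P * x = 0 \<longleftrightarrow> x = 0"
proof -
  have "(-1::'r) ^ P * (-1) ^ P = 1" by (simp add: power_mult_distrib[symmetric])
  then show ?thesis by (metis mult.assoc mult_1 mult_zero_right)
qed


lemma not_mu_ok_mod:
  assumes "b \<in> tbasis n j" "b' \<in> tbasis n j" "\<And>i. b' i \<subseteq> b i" "lvl j b < i0" "i0 \<le> n"
    "card (b' i0) \<noteq> 1"
  shows "\<not> mu_ok n j b'"
proof -
  have "lvl j b' \<le> lvl j b" by (rule lvl_mono[OF assms(1,3)])
  then show ?thesis using mu_ok_iff[OF assms(2)] assms(4-6) by auto
qed

lemma muT_tilde0: "muT n j \<omega> \<in> tilde0 n j"
proof -
  have T: "muT n j \<omega> \<in> cochT n j" unfolding cochT_def muT_def by auto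
  have A: "\<forall>b. bad n j b \<longrightarrow> muT n j \<omega> b = 0"
    using bad_iff unfolding muT_def by auto
  have D: "dT n j (muT n j \<omega>) b = 0" if bb: "bad n j b" for b
  proof (cases "b \<in> tbasis n j")
    case False then show ?thesis unfolding dT_def by simp
  next
    case b: True
    have "\<not> mu_ok n j b" using bb bad_iff[OF b] by simp
    then have "\<not> (\<forall>i\<in>{lvl j b<..n}. card (b i) = 1)" using mu_ok_iff[OF b] by simp
    then obtain i0 where i0: "lvl j b < i0" "i0 \<le> n" "card (b i0) \<noteq> 1" by auto
    have c1: "1 \<le> card (b i0)" using tbasis_card[OF b i0(2)] .
    have fin: "finite (b i0)" using tbasis_fin[OF b] .
    have Z: "muT n j \<omega> (b(k := b k - {v})) = 0"
      if "k \<le> n" "k \<noteq> i0" "v \<in> b k" "2 \<le> card (b k)" for k v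
    proof -
      have "b(k := b k - {v}) \<in> tbasis n j" by (rule tbasis_remove[OF b that(1,3,4)])
      moreover have "\<not> mu_ok n j (b(k := b k - {v}))"
        by (rule not_mu_ok_mod[OF b calculation _ i0(1,2)]) (use that i0 in auto)
      ultimately show ?thesis unfolding muT_def by simp
    qed
    have E: "dT n j (muT n j \<omega>) b = (-1) ^ (\<Sum>k<i0. card (b k) - 1) *
     (\<Sum>v\<in>b i0. if 2 \<le> card (b i0) then (-1) ^ card {u\<in>b i0. u < v} * muT n j \<omega> (b(i0 := b i0 - {v})) else 0)"
      by (rule dT_single[OF b i0(2)]) (rule Z)
    show ?thesis
    proof (cases "card (b i0) = 2")
      case True
      then obtain u w where uw: "b i0 = {u, w}" "u \<noteq> w" by (meson card_2_iff)
      have bu: "b(i0 := {u}) \<in> tbasis n j" using tbasis_remove[OF b i0(2), of w] True uw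
        by (simp add: insert_Diff_if)
      have bw: "b(i0 := {w}) \<in> tbasis n j" using tbasis_remove[OF b i0(2), of u] True uw
        by (simp add: insert_Diff_if)
      have lw: "lvl j (b(i0 := {w})) = lvl j b" by (rule lvl_eq[OF b]) (use i0 in auto)
      have g: "muT n j \<omega> (b(i0 := {u})) = muT n j \<omega> (b(i0 := {w}))"
        by (rule muT_eq[OF bw bu]) (use lw i0 in auto)
      have "(\<Sum>v\<in>{u, w}. (-1) ^ card {x\<in>{u, w}. x < v} * muT n j \<omega> (b(i0 := {u, w} - {v}))) = 0"
        using g uw(2) by (subst two_sum) (auto simp: insert_Diff_if)
      then show ?thesis unfolding E using True uw by simp
    next
      case False
      then have c3: "3 \<le> card (b i0)" using c1 i0(3) by linarith
      have "(\<Sum>v\<in>b i0. if 2 \<le> card (b i0) then (-1) ^ card {u\<in>b i0. u < v} * muT n j \<omega> (b(i0 := b i0 - {v})) else 0) = 0"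
      proof (intro sum.neutral ballI)
        fix v assume v: "v \<in> b i0"
        have bv: "b(i0 := b i0 - {v}) \<in> tbasis n j" by (rule tbasis_remove[OF b i0(2) v]) (use c3 in simp)
        have "\<not> mu_ok n j (b(i0 := b i0 - {v}))"
          by (rule not_mu_ok_mod[OF b bv _ i0(1,2)]) (use c3 v fin in auto)
        then show "(if 2 \<le> card (b i0) then (-1) ^ card {u\<in>b i0. u < v} * muT n j \<omega> (b(i0 := b i0 - {v})) else 0) = 0"
          unfolding muT_def by simp
      qed
      then show ?thesis unfolding E by simp
    qed
  qed
  show ?thesis unfolding tilde0_iff using T A D by blast
qed


lemma tilde0_zero:
  assumes "\<omega> \<in> tilde0 n j" "b \<in> tbasis n j" "\<not> mu_ok n j b"
  shows "\<omega> b = 0"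
  using assms bad_iff tilde0_iff by blast

lemma swap:
  assumes w: "\<omega> \<in> tilde0 n j" and b: "b \<in> tbasis n j" and i: "lvl j b < i" "i \<le> n"
    and u: "b i = {u}" and bw: "b(i := {w}) \<in> tbasis n j" and uw: "u \<noteq> w"
  shows "\<omega> (b(i := {w})) = \<omega> b"
proof -
  define c where "c = b(i := {u, w})"
  have c: "c \<in> tbasis n j" unfolding c_def
  proof (rule tbasis_upd[OF b i(2)])
    show "{u, w} \<noteq> {}" by simp
    show "{u, w} \<subseteq> {..j i}" if "i < n"
    proof -
      have "b i \<subseteq> {..j i}" using b that unfolding tbasis_def by blast
      moreover have "(b(i := {w})) i \<subseteq> {..j i}" using bw that unfolding tbasis_def by blast
      ultimately show ?thesis using u by simp
    qed
    show "{u, w} \<subseteq> {..<j i}" if "i = n"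
    proof -
      have "b i \<subseteq> {..<j i}" using b that unfolding tbasis_def by blast
      moreover have "(b(i := {w})) i \<subseteq> {..<j i}" using bw that unfolding tbasis_def by blast
      ultimately show ?thesis using u by simp
    qed
  qed
  have lc: "lvl j c = lvl j b" unfolding c_def by (rule lvl_eq[OF b]) (use i in auto)
  have c2: "card (c i) = 2" unfolding c_def using uw by simp
  have "\<not> mu_ok n j c" using mu_ok_iff[OF c] lc i c2 by auto
  then have dz: "dT n j \<omega> c = 0" using w bad_iff[OF c] tilde0_iff by blast
  have Z: "\<omega> (c(k := c k - {v})) = 0"
    if "k \<le> n" "k \<noteq> i" "v \<in> c k" "2 \<le> card (c k)" for k v
  proof -
    have cv: "c(k := c k - {v}) \<in> tbasis n j" by (rule tbasis_remove[OF c that(1,3,4)])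
    have "\<not> mu_ok n j (c(k := c k - {v}))"
      by (rule not_mu_ok_mod[OF c cv _ _ i(2)]) (use that c2 lc i in auto)
    then show ?thesis by (rule tilde0_zero[OF w cv])
  qed
  have dE: "dT n j \<omega> c = (-1) ^ (\<Sum>k<i. card (c k) - 1) *
     (\<Sum>v\<in>c i. if 2 \<le> card (c i) then (-1) ^ card {x\<in>c i. x < v} * \<omega> (c(i := c i - {v})) else 0)"
    by (rule dT_single[OF c i(2)]) (rule Z)
  have "(-1) ^ (\<Sum>k<i. card (c k) - 1) *
     (\<Sum>v\<in>c i. if 2 \<le> card (c i) then (-1) ^ card {x\<in>c i. x < v} * \<omega> (c(i := c i - {v})) else 0) = 0"
    unfolding dE[symmetric] by (rule dz)
  then have "(\<Sum>v\<in>c i. if 2 \<le> card (c i) then (-1) ^ card {x\<in>c i. x < v} * \<omega> (c(i := c i - {v})) else 0) = 0"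
    by (rule neg1_pow_cancel[THEN iffD1])
  moreover have "c i = {u, w}" unfolding c_def by simp
  ultimately have "(\<Sum>v\<in>{u, w}. (-1) ^ card {x\<in>{u, w}. x < v} * \<omega> (c(i := {u, w} - {v}))) = 0"
    using c2 by (simp del: insert_Diff_if)
  then have "\<omega> (c(i := {u, w} - {u})) = \<omega> (c(i := {u, w} - {w}))"
    using two_sum[OF uw, of "\<lambda>v. \<omega> (c(i := {u, w} - {v}))"] by (simp del: insert_Diff_if)
  moreover have "{u, w} - {u} = {w}" "{u, w} - {w} = {u}" using uw by auto
  moreover have "c(i := {w}) = b(i := {w})" unfolding c_def by simp
  moreover have "c(i := {u}) = b" unfolding c_def using u by (metis fun_upd_triv fun_upd_upd)
  ultimately show ?thesis by simp
qed


lemma iter: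
  assumes "\<omega> \<in> tilde0 n j"
  shows "N = card {i\<in>{..n}. b i \<noteq> b' i} \<Longrightarrow> b \<in> tbasis n j \<Longrightarrow> b' \<in> tbasis n j
    \<Longrightarrow> mu_ok n j b \<Longrightarrow> mu_ok n j b' \<Longrightarrow> lvl j b' = lvl j b \<Longrightarrow> \<forall>i\<le>lvl j b. b' i = b i
    \<Longrightarrow> \<omega> b = \<omega> b'"
proof (induction N arbitrary: b)
  case 0
  then have "\<forall>i\<le>n. b i = b' i" by auto
  moreover have "\<forall>i>n. b i = b' i" using tbasis_out[OF 0(2)] tbasis_out[OF 0(3)] by simp
  ultimately have "b = b'" by (intro ext) (metis not_le)
  then show ?case by simp
next
  case (Suc N)
  have "{i\<in>{..n}. b i \<noteq> b' i} \<noteq> {}"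
  proof
    assume E: "{i\<in>{..n}. b i \<noteq> b' i} = {}"
    have "Suc N = card {i\<in>{..n}. b i \<noteq> b' i}" by (rule Suc.prems(1))
    also have "\<dots> = 0" unfolding E by simp
    finally show False by simp
  qed
  then obtain i where i: "i \<le> n" "b i \<noteq> b' i" by auto
  have il: "lvl j b < i" using i Suc.prems(7) by (metis not_less)
  have "card (b i) = 1" using mu_ok_iff[OF Suc.prems(2)] Suc.prems(4) il i by auto
  then obtain u where u: "b i = {u}" by (meson card_1_singletonE)
  have "card (b' i) = 1" using mu_ok_iff[OF Suc.prems(3)] Suc.prems(5,6) il i by auto
  then obtain w where w: "b' i = {w}" by (meson card_1_singletonE)
  have uw: "u \<noteq> w" using i u w by auto
  define b'' where "b'' = b(i := {w})"
  have b'': "b'' \<in> tbasis n j" unfolding b''_def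
  proof (rule tbasis_upd[OF Suc.prems(2) i(1)])
    show "{w} \<noteq> {}" by simp
    show "i < n \<Longrightarrow> {w} \<subseteq> {..j i}" using Suc.prems(3) w unfolding tbasis_def by auto
    show "i = n \<Longrightarrow> {w} \<subseteq> {..<j i}" using Suc.prems(3) w unfolding tbasis_def by auto
  qed
  have s: "\<omega> b'' = \<omega> b" unfolding b''_def
    by (rule swap[OF assms Suc.prems(2) il i(1) u _ uw]) (use b'' b''_def in simp)
  have l'': "lvl j b'' = lvl j b" unfolding b''_def by (rule lvl_eq[OF Suc.prems(2)]) (use il in auto)
  have m'': "mu_ok n j b''" unfolding mu_ok_iff[OF b''] l''
    using mu_ok_iff[OF Suc.prems(2)] Suc.prems(4) by (auto simp: b''_def)
  have "{k\<in>{..n}. b'' k \<noteq> b' k} = {k\<in>{..n}. b k \<noteq> b' k} - {i}"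
    unfolding b''_def using w by auto
  then have "N = card {k\<in>{..n}. b'' k \<noteq> b' k}" using Suc.prems(1) i by simp
  then have "\<omega> b'' = \<omega> b'"
  proof (rule Suc.IH[OF _ b'' Suc.prems(3) m'' Suc.prems(5)])
    show "lvl j b' = lvl j b''" using l'' Suc.prems(6) by simp
    show "\<forall>k\<le>lvl j b''. b' k = b'' k" using l'' Suc.prems(7) il unfolding b''_def by auto
  qed
  then show ?case using s by simp
qed

lemma muface_in_faces:
  assumes b: "b \<in> tbasis n j"
  shows "muface j b \<in> faces n j"
proof -
  note P = lvl_props[OF b]
  have "\<forall>i\<le>n. muface j b i \<subseteq> {..<j i}"
  proof (intro allI impI)
    fix i assume "i \<le> n"
    show "muface j b i \<subseteq> {..<j i}"
    proof (cases "i = n")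
      case True then show ?thesis using b unfolding muface_def tbasis_def by auto
    next
      case False
      then have "i < n" using \<open>i \<le> n\<close> by simp
      then have "b i \<subseteq> {..j i}" using b unfolding tbasis_def by auto
      then show ?thesis unfolding muface_def by auto
    qed
  qed
  moreover have "\<forall>i>n. muface j b i = {}" using P(1) unfolding muface_def by auto
  moreover have "muface j b (lvl j b) \<noteq> {}"
    using P(2) tbasis_ne[OF b P(1)] unfolding muface_def by simp
  ultimately show ?thesis unfolding faces_def using P(1) by blast
qed

lemma muface_inj:
  assumes b: "b \<in> tbasis n j" and b': "b' \<in> tbasis n j" and e: "muface j b = muface j b'"
  shows "lvl j b' = lvl j b \<and> (\<forall>i\<le>lvl j b. b' i = b i)"
proof -
  have ne: "muface j c (lvl j c) \<noteq> {}" "\<forall>i>lvl j c. muface j c i = {}" if "c \<in> tbasis n j" for c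
    using lvl_props(2)[OF that] tbasis_ne[OF that lvl_props(1)[OF that]] unfolding muface_def by auto
  have L: "lvl j b' = lvl j b"
  proof (rule ccontr)
    assume "lvl j b' \<noteq> lvl j b"
    then consider "lvl j b' < lvl j b" | "lvl j b < lvl j b'" by linarith
    then show False
    proof cases
      case 1 then show ?thesis using ne[OF b] ne[OF b'] e by force
    next
      case 2 then show ?thesis using ne[OF b] ne[OF b'] e by force
    qed
  qed
  have "b' i = b i" if "i \<le> lvl j b" for i
  proof (cases "i < lvl j b")
    case True
    have "b i = muface j b i \<union> {j i}" using lvl_props(3)[OF b True] True unfolding muface_def by auto
    moreover have "b' i = muface j b' i \<union> {j i}" using lvl_props(3)[OF b'] True L unfolding muface_def by auto
    ultimately show ?thesis using e by simp
  next
    case False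
    then have "i = lvl j b" using that by simp
    have "muface j b i = b i" unfolding muface_def using lvl_props(2)[OF b] \<open>i = lvl j b\<close> by simp
    moreover have "muface j b' i = b' i" unfolding muface_def using lvl_props(2)[OF b'] \<open>i = lvl j b\<close> L by simp
    ultimately show ?thesis using e by simp
  qed
  then show ?thesis using L by simp
qed


lemma exists_pre:
  assumes jn: "0 < j n" and G: "G \<in> faces n j"
  shows "\<exists>b\<in>tbasis n j. mu_ok n j b \<and> muface j b = G"
proof -
  define I where "I = {i. i \<le> n \<and> G i \<noteq> {}}"
  have fI: "finite I" unfolding I_def by simp
  have neI: "I \<noteq> {}" using G unfolding I_def faces_def by auto
  define t where "t = Max I"
  have t: "t \<le> n" "G t \<noteq> {}" using Max_in[OF fI neI] unfolding t_def I_def by auto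
  have tmax: "\<And>i. i \<le> n \<Longrightarrow> G i \<noteq> {} \<Longrightarrow> i \<le> t"
    using Max_ge[OF fI] unfolding t_def I_def by blast
  have Gsub: "\<And>i. i \<le> n \<Longrightarrow> G i \<subseteq> {..<j i}" using G unfolding faces_def by auto
  have Gout: "G i = {}" if "t < i" for i
  proof (cases "i \<le> n")
    case True then show ?thesis using tmax[of i] that by force
  next
    case False then show ?thesis using G unfolding faces_def by auto
  qed
  define b where "b i = (if i < t then G i \<union> {j i} else if i = t then G i
      else if i < n then {j i} else if i = n then {0} else {})" for i
  have bt: "b \<in> tbasis n j" unfolding tbasis_def
  proof (intro CollectI conjI allI impI)
    fix i assume "i < n"
    then show "b i \<subseteq> {..j i}" "b i \<noteq> {}" unfolding b_def using Gsub[of i] t by auto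
  next
    show "b n \<subseteq> {..<j n}" "b n \<noteq> {}" unfolding b_def using Gsub[of n] t jn by auto
  next
    fix i assume "n < i" then show "b i = {}" unfolding b_def using t by auto
  qed
  have lt: "lvl j b = t" unfolding lvl_def
  proof (rule Least_equality)
    show "j t \<notin> b t" unfolding b_def using Gsub[OF t(1)] by auto
    fix y assume y: "j y \<notin> b y"
    show "t \<le> y"
    proof (rule ccontr)
      assume "\<not> t \<le> y"
      then have "j y \<in> b y" unfolding b_def by simp
      then show False using y by simp
    qed
  qed
  have "mu_ok n j b" unfolding mu_ok_iff[OF bt] lt b_def by auto
  moreover have "muface j b = G"
  proof
    fix i show "muface j b i = G i"
    proof (cases "i \<le> t")
      case True
      then have "j i \<notin> G i" using Gsub[of i] t(1) by auto
      then show ?thesis unfolding muface_def lt b_def using True by auto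
    next
      case False then show ?thesis unfolding muface_def lt using Gout by simp
    qed
  qed
  ultimately show ?thesis using bt by blast
qed

theorem mainTheorem3:
  fixes n :: nat and j :: "nat \<Rightarrow> nat"
  assumes "0 < j n"
  shows "inj_on (muT n j :: ((nat \<Rightarrow> nat set) \<Rightarrow> 'r::comm_ring_1) \<Rightarrow> _) (cochN n j)
         \<and> muT n j ` cochN n j = (tilde0 n j :: ((nat \<Rightarrow> nat set) \<Rightarrow> 'r) set)"
proof (intro conjI)
  show "inj_on (muT n j :: ((nat \<Rightarrow> nat set) \<Rightarrow> 'r::comm_ring_1) \<Rightarrow> _) (cochN n j)"
  proof (rule inj_onI)
    fix \<omega>1 \<omega>2 :: "(nat \<Rightarrow> nat set) \<Rightarrow> 'r"
    assume w: "\<omega>1 \<in> cochN n j" "\<omega>2 \<in> cochN n j" "muT n j \<omega>1 = muT n j \<omega>2"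
    show "\<omega>1 = \<omega>2"
    proof
      fix G show "\<omega>1 G = \<omega>2 G"
      proof (cases "G \<in> faces n j")
        case True
        then obtain b where b: "b \<in> tbasis n j" "mu_ok n j b" "muface j b = G"
          using exists_pre[of j n, OF assms] by blast
        have "\<omega>1 G = muT n j \<omega>1 b" unfolding muT_def using b by simp
        also have "\<dots> = muT n j \<omega>2 b" using w(3) by simp
        also have "\<dots> = \<omega>2 G" unfolding muT_def using b by simp
        finally show ?thesis .
      next
        case False then show ?thesis using w(1,2) unfolding cochN_def by simp
      qed
    qed
  qed
  show "muT n j ` cochN n j = (tilde0 n j :: ((nat \<Rightarrow> nat set) \<Rightarrow> 'r) set)"
  proof
    show "muT n j ` cochN n j \<subseteq> (tilde0 n j :: ((nat \<Rightarrow> nat set) \<Rightarrow> 'r) set)"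
      using muT_tilde0 by blast
  next
    show "(tilde0 n j :: ((nat \<Rightarrow> nat set) \<Rightarrow> 'r) set) \<subseteq> muT n j ` cochN n j"
    proof
      fix \<omega> :: "(nat \<Rightarrow> nat set) \<Rightarrow> 'r" assume w: "\<omega> \<in> tilde0 n j"
      define pre where "pre G = (SOME b. b \<in> tbasis n j \<and> mu_ok n j b \<and> muface j b = G)" for G
      have pre: "pre G \<in> tbasis n j \<and> mu_ok n j (pre G) \<and> muface j (pre G) = G" if "G \<in> faces n j" for G
        unfolding pre_def using exists_pre[OF assms that] by (metis (mono_tags, lifting) someI_ex)
      define \<eta> where "\<eta> G = (if G \<in> faces n j then \<omega> (pre G) else 0)" for G
      have eta: "\<eta> \<in> cochN n j" unfolding cochN_def \<eta>_def by simp
      have "muT n j \<eta> = \<omega>"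
      proof
        fix b show "muT n j \<eta> b = \<omega> b"
        proof (cases "b \<in> tbasis n j \<and> mu_ok n j b")
          case True
          then have b: "b \<in> tbasis n j" "mu_ok n j b" by auto
          have F: "muface j b \<in> faces n j" by (rule muface_in_faces[OF b(1)])
          note p = pre[OF F]
          have D: "lvl j (pre (muface j b)) = lvl j b \<and> (\<forall>i\<le>lvl j b. pre (muface j b) i = b i)"
            by (rule muface_inj[OF b(1)]) (use p in simp_all)
          have "\<omega> b = \<omega> (pre (muface j b))"
            by (rule iter[OF w refl b(1)]) (use p D b in auto)
          then show ?thesis unfolding muT_def \<eta>_def using b F by simp
        next
          case False
          have "\<omega> b = 0"
          proof (cases "b \<in> tbasis n j")
            case True then show ?thesis using False tilde0_zero[OF w] by blast
          next
            case nb: False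
            have "\<omega> \<in> cochT n j" using w unfolding tilde0_def by simp
            then show ?thesis using nb unfolding cochT_def by simp
          qed
          then show ?thesis unfolding muT_def using False by auto
        qed
      qed
      then show "\<omega> \<in> muT n j ` cochN n j" using eta by blast
    qed
  qed
qed

end
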